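(* For a permutation $\pi$ of $[k]$ and $y\in\mathcal{Y}$ let $P_{\pi,y}=\mathrm{conv}\{\mathbbm{1}_{\pi,i}\odot y: i\in\{0,\dots,k\}\}$. Then (i) $\bigcup_{y\in\mathcal{Y},\pi}P_{\pi,y}=[-1,1]^k$; and (ii) for all $f\in\mathcal{F}_k$, all $y,y'\in\mathcal{Y}$ and all permutations $\pi$, the function $L^f(\cdot,y')$ is affine on $P_{\pi,y}$.
   Context: $[k]=\{1,\dots,k\}$, $\mathcal{Y}=\{-1,1\}^k$; $u\odot u'$ entrywise product, $\mathbbm{1}$ all-ones, $(x)_+$ entrywise positive part. $\mathbbm{1}_{\pi,i}$ is the $0/1$ indicator vector of $\{\pi_1,\dots,\pi_i\}$, with $\mathbbm{1}_{\pi,0}=0$. $\mathcal{F}_k$: set functions $f:2^{[k]}\to\mathbb{R}$ that are submodular, increasing and normalized. Lovász extension $F(x)=\max_\pi\sum_{i=1}^kx_{\pi_i}(f(\{\pi_1,..,\pi_i\})-f(\{\pi_1,..,\pi_{i-1}\}))$ for $x\in\mathbb{R}^k_+$; Lovász hinge $L^f(u,y)=F((\mathbbm{1}-u\odot y)_+)$. *)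

theory Defs
  imports "HOL-Analysis.Analysis"
begin

text \<open>Coordinates are indexed by a finite type 'n with CARD('n) = k.
  A permutation pi of [k] is a list of all indices without repetition:
  pi_i = pi ! (i-1).\<close>

definition perms :: "'n::finite list set" where
  "perms = {p. distinct p \<and> set p = UNIV}"


definition Ycube :: "(real ^ 'n::finite) set" where
  "Ycube = {y. \<forall>i. y $ i = -1 \<or> y $ i = 1}"

definition ind_prefix :: "'n::finite list \<Rightarrow> nat \<Rightarrow> real ^ 'n" where
  "ind_prefix p i = (\<chi> j. if j \<in> set (take i p) then 1 else 0)"

definition emul :: "real ^ 'n::finite \<Rightarrow> real ^ 'n \<Rightarrow> real ^ 'n" where
  "emul u v = (\<chi> j. u $ j * v $ j)"

definition pospart :: "real ^ 'n::finite \<Rightarrow> real ^ 'n" where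
  "pospart x = (\<chi> j. max 0 (x $ j))"

definition submodular :: "('n set \<Rightarrow> real) \<Rightarrow> bool" where
  "submodular f \<longleftrightarrow> (\<forall>A B. f (A \<union> B) + f (A \<inter> B) \<le> f A + f B)"

definition Fk :: "('n::finite set \<Rightarrow> real) set" where
  "Fk = {f. submodular f \<and> (\<forall>A B. A \<subseteq> B \<longrightarrow> f A \<le> f B) \<and> f {} = 0}"

definition lovasz_ext :: "('n::finite set \<Rightarrow> real) \<Rightarrow> real ^ 'n \<Rightarrow> real" where
  "lovasz_ext f x = Max ((\<lambda>p. \<Sum>i=1..CARD('n).
      x $ (p ! (i - 1)) * (f (set (take i p)) - f (set (take (i - 1) p)))) ` perms)"

definition lovasz_hinge :: "('n::finite set \<Rightarrow> real) \<Rightarrow> real ^ 'n \<Rightarrow> real ^ 'n \<Rightarrow> real" where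
  "lovasz_hinge f u y = lovasz_ext f (pospart (1 - emul u y))"

definition Ppoly :: "'n::finite list \<Rightarrow> real ^ 'n \<Rightarrow> (real ^ 'n) set" where
  "Ppoly p y = convex hull {emul (ind_prefix p i) y | i. i \<le> CARD('n)}"

end

theory Submission
  imports Defs
begin


definition lval :: "('n set \<Rightarrow> real) \<Rightarrow> ('n \<Rightarrow> real) \<Rightarrow> 'n list \<Rightarrow> real" where
  "lval f w p = (\<Sum>i<length p. w (p!i) * (f (set (take (Suc i) p)) - f (set (take i p))))"

lemma abel_id:
  fixes a F :: "nat \<Rightarrow> real"
  shows "(\<Sum>i<n. a i * (F (Suc i) - F i)) = (\<Sum>i<n. (a i - a (Suc i)) * F (Suc i)) + a n * F n - a 0 * F 0"
  by (induction n) (auto simp: algebra_simps)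

lemma tele_cond:
  fixes a :: "nat \<Rightarrow> real"
  shows "k \<le> n \<Longrightarrow> (\<Sum>m<n. if k \<le> m then a m - a (Suc m) else 0) = a k - a n"
proof (induction n)
  case 0 then show ?case by simp
next
  case (Suc n)
  show ?case
  proof (cases "k \<le> n")
    case True then show ?thesis using Suc by simp
  next
    case False
    then have "k = Suc n" using Suc.prems by simp
    then show ?thesis by simp
  qed
qed

lemma nth_in_take_iff:
  assumes "distinct p" "b < length p"
  shows "(p!b \<in> set (take i p)) = (b < i)"
proof
  assume "p ! b \<in> set (take i p)"
  then obtain k where k: "k < length (take i p)" "take i p ! k = p ! b"
    by (auto simp: in_set_conv_nth)
  then have "k < i" "k < length p" "p ! k = p ! b" by auto
  then have "k = b" using assms nth_eq_iff_index_eq by blast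
  then show "b < i" using \<open>k < i\<close> by simp
next
  assume "b < i"
  then show "p ! b \<in> set (take i p)"
    using assms by (metis in_set_conv_nth length_take min_less_iff_conj nth_take)
qed

lemma greedyG:
  fixes f :: "'n set \<Rightarrow> real"
  assumes sub: "submodular f" and dist: "distinct p"
  shows "(\<Sum>i<length p. if p!i \<in> A then f (set (take (Suc i) p)) - f (set (take i p)) else 0)
          \<le> f (A \<inter> set p) - f {}"
  using dist
proof (induction p rule: rev_induct)
  case Nil then show ?case by simp
next
  case (snoc x p)
  have dp: "distinct p" and xp: "x \<notin> set p" using snoc.prems by auto
  have eq: "(\<Sum>i<length (p @ [x]). if (p @ [x])!i \<in> A then f (set (take (Suc i) (p @ [x]))) - f (set (take i (p @ [x]))) else 0)
      = (\<Sum>i<length p. if p!i \<in> A then f (set (take (Suc i) p)) - f (set (take i p)) else 0)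
        + (if x \<in> A then f (insert x (set p)) - f (set p) else 0)"
    by (auto simp: nth_append intro!: sum.cong)
  show ?case
  proof (cases "x \<in> A")
    case True
    have "f (set p \<union> insert x (A \<inter> set p)) + f (set p \<inter> insert x (A \<inter> set p)) \<le> f (set p) + f (insert x (A \<inter> set p))"
      using sub unfolding submodular_def by blast
    moreover have "set p \<union> insert x (A \<inter> set p) = insert x (set p)" by auto
    moreover have "set p \<inter> insert x (A \<inter> set p) = A \<inter> set p" using xp by auto
    moreover have "A \<inter> set (p @ [x]) = insert x (A \<inter> set p)" using True by auto
    ultimately show ?thesis using eq snoc.IH[OF dp] True by simp
  next
    case False
    then have "A \<inter> set (p @ [x]) = A \<inter> set p" by auto
    then show ?thesis using eq snoc.IH[OF dp] False by simp
  qed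
qed

lemma lval_tele:
  fixes f :: "'n set \<Rightarrow> real"
  shows   "(\<Sum>i<length p. f (set (take (Suc i) p)) - f (set (take i p))) = f (set p) - f {}"
  using sum_lessThan_telescope[of "\<lambda>i. f (set (take i p))" "length p"] by simp

lemma greedy:
  fixes f :: "'n::finite set \<Rightarrow> real"
  assumes sub: "submodular f" and f0: "f {} = 0"
    and ds: "distinct s" "set s = UNIV" and dp: "distinct p" "set p = UNIV"
    and sorted: "\<And>i j. i < j \<Longrightarrow> j < length s \<Longrightarrow> w (s!j) \<le> w (s!i)"
  shows "lval f w p \<le> lval f w s"
proof -
  define n where "n = length s"
  have ln: "length p = n" unfolding n_def using ds dp
    by (metis distinct_card)
  define a where "a i = (if i < n then w (s!i) else 0)" for i
  define d where "d m = a m - a (Suc m)" for m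
  define T where "T m = set (take m s)" for m
  define D where "D i = f (set (take (Suc i) p)) - f (set (take i p))" for i
  have vs: "lval f w s = (\<Sum>m<n. d m * f (T (Suc m)))"
  proof -
    have "lval f w s = (\<Sum>i<n. a i * (f (T (Suc i)) - f (T i)))"
      unfolding lval_def n_def a_def T_def by simp
    also have "\<dots> = (\<Sum>m<n. d m * f (T (Suc m)))"
      using abel_id[of a "\<lambda>i. f (T i)" n] f0 unfolding d_def T_def a_def by simp
    finally show ?thesis .
  qed
  have wexp: "w j = (\<Sum>m<n. d m * (if j \<in> T (Suc m) then 1 else 0))" for j
  proof -
    obtain k where k: "k < n" "s!k = j" using ds unfolding n_def
      by (metis UNIV_I in_set_conv_nth)
    have "(\<Sum>m<n. d m * (if j \<in> T (Suc m) then 1 else 0)) = (\<Sum>m<n. if k \<le> m then a m - a (Suc m) else 0)"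
      apply (rule sum.cong, simp)
      using nth_in_take_iff[OF ds(1), of k] k unfolding T_def d_def n_def by auto
    also have "\<dots> = a k - a n" using tele_cond[of k n a] k by simp
    also have "\<dots> = w j" using k unfolding a_def by simp
    finally show ?thesis by simp
  qed
  have "lval f w p = (\<Sum>i<n. (\<Sum>m<n. d m * (if p!i \<in> T (Suc m) then 1 else 0)) * D i)"
    unfolding lval_def D_def ln using wexp by simp
  also have "\<dots> = (\<Sum>m<n. d m * (\<Sum>i<n. if p!i \<in> T (Suc m) then D i else 0))"
  proof -
    have "(\<Sum>i<n. (\<Sum>m<n. d m * (if p!i \<in> T (Suc m) then 1 else 0)) * D i)
        = (\<Sum>i<n. \<Sum>m<n. d m * (if p!i \<in> T (Suc m) then D i else 0))"
      by (auto simp: sum_distrib_right intro!: sum.cong)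
    also have "\<dots> = (\<Sum>m<n. \<Sum>i<n. d m * (if p!i \<in> T (Suc m) then D i else 0))"
      by (rule sum.swap)
    also have "\<dots> = (\<Sum>m<n. d m * (\<Sum>i<n. if p!i \<in> T (Suc m) then D i else 0))"
      by (simp add: sum_distrib_left)
    finally show ?thesis .
  qed
  also have "\<dots> \<le> (\<Sum>m<n. d m * f (T (Suc m)))"
  proof (rule sum_mono)
    fix m assume m: "m \<in> {..<n}"
    have G: "(\<Sum>i<n. if p!i \<in> T (Suc m) then D i else 0) \<le> f (T (Suc m))"
      using greedyG[OF sub dp(1), of "T (Suc m)"] f0 dp(2) unfolding D_def ln by simp
    show "d m * (\<Sum>i<n. if p!i \<in> T (Suc m) then D i else 0) \<le> d m * f (T (Suc m))"
    proof (cases "Suc m < n")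
      case True
      then have "d m \<ge> 0" unfolding d_def a_def using sorted[of m "Suc m"] n_def by simp
      then show ?thesis using G by (simp add: mult_left_mono)
    next
      case False
      then have "Suc m = n" using m by simp
      then have TU: "T (Suc m) = UNIV" unfolding T_def n_def using ds by simp
      have "(\<Sum>i<n. if p!i \<in> T (Suc m) then D i else 0) = (\<Sum>i<n. D i)" using TU by simp
      also have "\<dots> = f (T (Suc m))" using lval_tele[of f p] f0 dp TU unfolding D_def ln by simp
      finally show ?thesis by simp
    qed
  qed
  finally show ?thesis using vs by simp
qed



lemma perms_finite: "finite (perms :: 'n::finite list set)"
proof -
  have "perms \<subseteq> {xs :: 'n list. set xs \<subseteq> UNIV \<and> distinct xs}" unfolding perms_def by auto
  then show ?thesis using finite_subset_distinct[of "UNIV :: 'n set"] finite_subset by auto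
qed

lemma perms_length: "p \<in> perms \<Longrightarrow> length (p :: 'n::finite list) = CARD('n)"
  unfolding perms_def by (metis (mono_tags) distinct_card mem_Collect_eq)

lemma lovasz_ext_eq:
  fixes x :: "real^'n::finite" and f :: "'n set \<Rightarrow> real"
  shows "lovasz_ext f x = Max (lval f (\<lambda>j. x $ j) ` perms)"
proof -
  have "(\<Sum>i=1..CARD('n).
      x $ (p ! (i - 1)) * (f (set (take i p)) - f (set (take (i - 1) p)))) = lval f (\<lambda>j. x $ j) p"
    if "p \<in> perms" for p
  proof -
    have "(\<Sum>i=1..CARD('n).
      x $ (p ! (i - 1)) * (f (set (take i p)) - f (set (take (i - 1) p))))
      = (\<Sum>i<CARD('n). x $ (p ! i) * (f (set (take (Suc i) p)) - f (set (take i p))))"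
      using sum.atLeast1_atMost_eq[of "\<lambda>i. x $ (p ! (i - 1)) * (f (set (take i p)) - f (set (take (i - 1) p)))" "CARD('n)"]
      by simp
    then show ?thesis unfolding lval_def using perms_length[OF that] by simp
  qed
  then show ?thesis unfolding lovasz_ext_def by (metis (no_types, lifting) image_cong)
qed

lemma lovasz_ext_greedy:
  fixes f :: "'n::finite set \<Rightarrow> real"
  assumes "submodular f" "f {} = 0" "s \<in> perms"
    and "\<And>i j. i < j \<Longrightarrow> j < length s \<Longrightarrow> x $ (s!j) \<le> x $ (s!i)"
  shows "lovasz_ext f x = lval f (\<lambda>j. x $ j) s"
proof -
  have "lval f (\<lambda>j. x $ j) p \<le> lval f (\<lambda>j. x $ j) s" if "p \<in> perms" for p
    using greedy[OF assms(1,2), of s p "\<lambda>j. x $ j"] assms(3,4) that by (auto simp: perms_def)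
  then show ?thesis unfolding lovasz_ext_eq
    using perms_finite assms(3) by (intro Max_eqI) auto
qed

lemma Ycube_sq: "y \<in> Ycube \<Longrightarrow> y $ j * y $ j = 1"
proof -
  assume "y \<in> Ycube"
  then have "y $ j = -1 \<or> y $ j = 1" unfolding Ycube_def by auto
  then show ?thesis by auto
qed

definition Qset :: "'n::finite list \<Rightarrow> real^'n \<Rightarrow> (real^'n) set" where
  "Qset p y = {u. (\<forall>j. 0 \<le> y$j * u$j \<and> y$j * u$j \<le> 1) \<and>
     (\<forall>a b. a \<le> b \<and> b < length p \<longrightarrow> y$(p!b) * u$(p!b) \<le> y$(p!a) * u$(p!a))}"

lemma convex_Qset: "convex (Qset (p :: 'n::finite list) y)"
  unfolding convex_def
proof (intro ballI allI impI)
  fix x z :: "real^'n" and u v :: real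
  assume x: "x \<in> Qset p y" and z: "z \<in> Qset p y" and uv: "0 \<le> u" "0 \<le> v" "u + v = 1"
  have c: "y $ j * (u *\<^sub>R x + v *\<^sub>R z) $ j = u * (y$j * x$j) + v * (y$j * z$j)" for j
    by (simp add: algebra_simps)
  show "u *\<^sub>R x + v *\<^sub>R z \<in> Qset p y"
    unfolding Qset_def mem_Collect_eq c
  proof (intro conjI allI impI)
    fix j
    have "0 \<le> y$j * x$j" "y$j * x$j \<le> 1" "0 \<le> y$j * z$j" "y$j * z$j \<le> 1"
      using x z unfolding Qset_def by auto
    then have "u * (y$j * x$j) \<le> u" "v * (y$j * z$j) \<le> v"
      using uv mult_left_le by auto
    then show "u * (y$j * x$j) + v * (y$j * z$j) \<le> 1" using uv by linarith
    show "0 \<le> u * (y$j * x$j) + v * (y$j * z$j)"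
      using uv \<open>0 \<le> y$j * x$j\<close> \<open>0 \<le> y$j * z$j\<close> by simp
  next
    fix a b assume ab: "a \<le> b \<and> b < length p"
    have "y$(p!b) * x$(p!b) \<le> y$(p!a) * x$(p!a)" "y$(p!b) * z$(p!b) \<le> y$(p!a) * z$(p!a)"
      using x z ab unfolding Qset_def by auto
    then show "u * (y$(p!b) * x$(p!b)) + v * (y$(p!b) * z$(p!b)) \<le> u * (y$(p!a) * x$(p!a)) + v * (y$(p!a) * z$(p!a))"
      using uv by (simp add: add_mono mult_left_mono)
  qed
qed

lemma gens_in_Qset:
  assumes "p \<in> perms" "y \<in> Ycube"
  shows "emul (ind_prefix p i) y \<in> Qset p y"
proof -
  have e: "y $ j * emul (ind_prefix p i) y $ j = (if j \<in> set (take i p) then 1 else 0)" for j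
    using Ycube_sq[OF assms(2), of j] unfolding emul_def ind_prefix_def by (simp add: algebra_simps)
  have d: "distinct p" using assms(1) unfolding perms_def by simp
  show ?thesis unfolding Qset_def mem_Collect_eq e
    using nth_in_take_iff[OF d] by auto
qed

lemma Ppoly_sub: "p \<in> perms \<Longrightarrow> y \<in> Ycube \<Longrightarrow> Ppoly p y \<subseteq> Qset p y"
  unfolding Ppoly_def
  by (rule hull_minimal) (use gens_in_Qset convex_Qset in auto)

lemma Qset_cube: "y \<in> Ycube \<Longrightarrow> u \<in> Qset p y \<Longrightarrow> -1 \<le> u $ j \<and> u $ j \<le> 1"
proof -
  assume y: "y \<in> Ycube" and u: "u \<in> Qset p y"
  have "y $ j = -1 \<or> y $ j = 1" using y unfolding Ycube_def by auto
  moreover have "0 \<le> y$j * u$j" "y$j * u$j \<le> 1" using u unfolding Qset_def by auto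
  ultimately show ?thesis by auto
qed



lemma one_comp: "(1 :: real^'n::finite) $ j = 1"
  by simp

lemma part1_sup:
  fixes u :: "real^'n::finite"
  assumes cube: "\<forall>j. -1 \<le> u $ j \<and> u $ j \<le> 1"
  shows "\<exists>y\<in>Ycube. \<exists>p\<in>perms. u \<in> Ppoly p y"
proof -
  define y :: "real^'n" where "y = (\<chi> j. if 0 \<le> u$j then 1 else -1)"
  define v where "v j = \<bar>u $ j\<bar>" for j
  obtain l :: "'n list" where l: "distinct l" "set l = UNIV"
    using finite_distinct_list[of "UNIV :: 'n set"] by auto
  define p where "p = sort_key (\<lambda>j. - v j) l"
  have pp: "p \<in> perms" unfolding p_def perms_def using l by (simp add: distinct_sort)
  define n where "n = CARD('n)"
  have lp: "length p = n" using perms_length[OF pp] n_def by simp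
  have n1: "1 \<le> n" unfolding n_def by (simp add: Suc_leI)
  have srt: "sorted (map (\<lambda>j. - v j) p)" unfolding p_def by (rule sorted_sort_key)
  have vmono: "v (p!b) \<le> v (p!a)" if "a \<le> b" "b < n" for a b
  proof -
    have "(map (\<lambda>j. - v j) p) ! a \<le> (map (\<lambda>j. - v j) p) ! b"
      using sorted_nth_mono[OF srt, of a b] that lp by simp
    then show ?thesis using that lp by simp
  qed
  have v01: "0 \<le> v j" "v j \<le> 1" for j unfolding v_def using cube[rule_format, of j] by auto
  have yc: "y \<in> Ycube" unfolding Ycube_def y_def by auto
  define e where "e i = (if i = 0 then 1 else if i \<le> n then v (p!(i-1)) else 0)" for i
  define lam where "lam i = e i - e (Suc i)" for i
  define g where "g i = emul (ind_prefix p i) y" for i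
  have lam0: "0 \<le> lam i" if "i \<in> {..<Suc n}" for i
  proof -
    have "i \<le> n" using that by simp
    consider "i = 0" | "0 < i" "i < n" | "i = n" "0 < i" using \<open>i \<le> n\<close> by linarith
    then show ?thesis
    proof cases
      case 1 then show ?thesis unfolding lam_def e_def using n1 v01 by simp
    next
      case 2 then show ?thesis unfolding lam_def e_def using vmono[of "i-1" i] by simp
    next
      case 3 then show ?thesis unfolding lam_def e_def using v01 by simp
    qed
  qed
  have lam1: "sum lam {..<Suc n} = 1"
  proof -
    have "sum lam {..<Suc n} = - (\<Sum>i<Suc n. e (Suc i) - e i)"
      unfolding lam_def by (simp add: sum_negf[symmetric])
    also have "\<dots> = 1" using sum_lessThan_telescope[of e "Suc n"] unfolding e_def by simp
    finally show ?thesis .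
  qed
  have ueq: "u = (\<Sum>i<Suc n. lam i *\<^sub>R g i)"
  proof (subst vec_eq_iff, intro allI)
    fix j
    have "j \<in> set p" using pp unfolding perms_def by simp
    then obtain k where k: "k < n" "p!k = j" using lp by (auto simp: in_set_conv_nth)
    have dp: "distinct p" using pp unfolding perms_def by simp
    have mem: "(j \<in> set (take i p)) = (Suc k \<le> i)" for i
      using nth_in_take_iff[OF dp, of k i] k lp by auto
    have gc: "g i $ j = (if Suc k \<le> i then 1 else 0) * y $ j" for i
      unfolding g_def emul_def ind_prefix_def by (simp add: mem)
    have "(\<Sum>i<Suc n. lam i *\<^sub>R g i) $ j = (\<Sum>i<Suc n. lam i * g i $ j)"
      by (simp add: sum_component)
    also have "\<dots> = (\<Sum>i<Suc n. (if Suc k \<le> i then e i - e (Suc i) else 0)) * y $ j"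
      unfolding sum_distrib_right gc lam_def by (intro sum.cong) auto
    also have "\<dots> = (e (Suc k) - e (Suc n)) * y $ j"
      using tele_cond[of "Suc k" "Suc n" e] k by simp
    also have "\<dots> = v j * y $ j" using k unfolding e_def by simp
    also have "\<dots> = u $ j" unfolding v_def y_def by auto
    finally show "u $ j = (\<Sum>i<Suc n. lam i *\<^sub>R g i) $ j" by simp
  qed
  have "(\<Sum>i<Suc n. lam i *\<^sub>R g i) \<in> Ppoly p y"
  proof (rule convex_sum)
    show "finite {..<Suc n}" by simp
    show "convex (Ppoly p y)" unfolding Ppoly_def by (rule convex_convex_hull)
    show "sum lam {..<Suc n} = 1" by (rule lam1)
    show "\<And>i. i \<in> {..<Suc n} \<Longrightarrow> 0 \<le> lam i" by (rule lam0)
    show "\<And>i. i \<in> {..<Suc n} \<Longrightarrow> g i \<in> Ppoly p y"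
      unfolding Ppoly_def g_def n_def by (rule hull_inc) auto
  qed
  then show ?thesis using ueq yc pp by auto
qed



lemma part2:
  fixes f :: "'n::finite set \<Rightarrow> real"
  assumes fF: "f \<in> Fk" and y: "y \<in> Ycube" and y': "y' \<in> Ycube" and pp: "p \<in> perms"
  shows "\<exists>(a :: real ^ 'n) b. \<forall>u\<in>Ppoly p y. lovasz_hinge f u y' = a \<bullet> u + b"
proof -
  have sub: "submodular f" and f0: "f {} = 0" using fF unfolding Fk_def by auto
  have dp: "distinct p" and sp: "set p = UNIV" using pp unfolding perms_def by auto
  define s where "s = filter (\<lambda>j. y$j \<noteq> y'$j) p @ rev (filter (\<lambda>j. y$j = y'$j) p)"
  have sperm: "s \<in> perms" unfolding perms_def s_def using dp sp by auto
  define n where "n = length s"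
  define c where "c i = f (set (take (Suc i) s)) - f (set (take i s))" for i
  define a :: "real^'n" where "a = (\<Sum>i<n. (- (c i * y'$(s!i))) *\<^sub>R axis (s!i) 1)"
  define b where "b = (\<Sum>i<n. c i)"
  have yy: "y$j = -1 \<or> y$j = 1" "y'$j = -1 \<or> y'$j = 1" for j using y y' unfolding Ycube_def by auto
  show ?thesis
  proof (intro exI ballI)
    fix u assume uP: "u \<in> Ppoly p y"
    have uQ: "u \<in> Qset p y" using Ppoly_sub[OF pp y] uP by auto
    define V where "V j = y$j * u$j" for j
    define W where "W j = 1 - u$j * y'$j" for j
    have V01: "0 \<le> V j" "V j \<le> 1" for j using uQ unfolding Qset_def V_def by auto
    have Vmono: "V (p!b) \<le> V (p!a)" if "a \<le> b" "b < length p" for a b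
      using uQ that unfolding Qset_def V_def by auto
    have Weq: "W j = (if y$j = y'$j then 1 - V j else 1 + V j)" for j
      unfolding W_def V_def using yy[of j] by auto
    have W0: "0 \<le> W j" for j using Weq[of j] V01[of j] by auto
    have pos: "pospart (1 - emul u y') = 1 - emul u y'"
      unfolding pospart_def vec_eq_iff using W0 unfolding W_def emul_def by simp
    have srtp: "sorted_wrt (\<lambda>a b. V b \<le> V a) p"
      unfolding sorted_wrt_iff_nth_less using Vmono by auto
    have s1: "sorted_wrt (\<lambda>a b. W b \<le> W a) (filter (\<lambda>j. y$j \<noteq> y'$j) p)"
      by (rule sorted_wrt_mono_rel[OF _ sorted_wrt_filter[OF srtp]]) (auto simp: Weq)
    have s2: "sorted_wrt (\<lambda>a b. W b \<le> W a) (rev (filter (\<lambda>j. y$j = y'$j) p))"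
      unfolding sorted_wrt_rev
      by (rule sorted_wrt_mono_rel[OF _ sorted_wrt_filter[OF srtp]]) (auto simp: Weq)
    have srts: "sorted_wrt (\<lambda>a b. W b \<le> W a) s"
    proof -
      have Vc: "- V b \<le> V x" for x b using V01[of b] V01[of x] by linarith
      show ?thesis unfolding s_def sorted_wrt_append using s1 s2 Vc by (auto simp: Weq)
    qed
    have hinge: "lovasz_hinge f u y' = lval f W s"
    proof -
      have "lovasz_hinge f u y' = lovasz_ext f (1 - emul u y')"
        unfolding lovasz_hinge_def pos by simp
      also have "\<dots> = lval f (\<lambda>j. (1 - emul u y') $ j) s"
        by (rule lovasz_ext_greedy[OF sub f0 sperm])
           (use srts in \<open>auto simp: sorted_wrt_iff_nth_less W_def emul_def\<close>)
      also have "(\<lambda>j. (1 - emul u y') $ j) = W" unfolding W_def emul_def by auto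
      finally show ?thesis .
    qed
    have "lval f W s = (\<Sum>i<n. c i) - (\<Sum>i<n. (c i * y'$(s!i)) * u$(s!i))"
      unfolding lval_def n_def[symmetric] c_def[symmetric] W_def
      by (simp add: algebra_simps sum_subtractf)
    also have "\<dots> = a \<bullet> u + b"
      unfolding a_def b_def by (simp add: inner_sum_left inner_axis' sum_negf)
    finally show "lovasz_hinge f u y' = a \<bullet> u + b" using hinge by simp
  qed
qed

theorem lemma3:
  shows "(\<Union>y\<in>(Ycube :: (real ^ 'n::finite) set). \<Union>p\<in>perms. Ppoly p y)
           = {u. \<forall>j. -1 \<le> u $ j \<and> u $ j \<le> 1}
       \<and> (\<forall>f\<in>(Fk :: ('n set \<Rightarrow> real) set). \<forall>y\<in>Ycube. \<forall>y'\<in>Ycube. \<forall>p\<in>perms.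
           \<exists>(a :: real ^ 'n) b. \<forall>u\<in>Ppoly p y. lovasz_hinge f u y' = a \<bullet> u + b)"
proof (intro conjI ballI)
  show "(\<Union>y\<in>(Ycube :: (real ^ 'n::finite) set). \<Union>p\<in>perms. Ppoly p y)
           = {u. \<forall>j. -1 \<le> u $ j \<and> u $ j \<le> 1}"
  proof
    show "(\<Union>y\<in>(Ycube :: (real ^ 'n::finite) set). \<Union>p\<in>perms. Ppoly p y) \<subseteq> {u. \<forall>j. -1 \<le> u $ j \<and> u $ j \<le> 1}"
      using Ppoly_sub Qset_cube by blast
    show "{u. \<forall>j. -1 \<le> u $ j \<and> u $ j \<le> 1} \<subseteq> (\<Union>y\<in>(Ycube :: (real ^ 'n::finite) set). \<Union>p\<in>perms. Ppoly p y)"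
      using part1_sup by blast
  qed
next
  fix f :: "'n set \<Rightarrow> real" and y y' :: "real^'n" and p :: "'n list"
  assume "f \<in> Fk" "y \<in> Ycube" "y' \<in> Ycube" "p \<in> perms"
  then show "\<exists>(a :: real ^ 'n) b. \<forall>u\<in>Ppoly p y. lovasz_hinge f u y' = a \<bullet> u + b"
    by (rule part2)
qed

end
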